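(* Let $\mathbf{x}:[-1,1]^2\to\mathbb{R}^2$, $\mathbf{x}(\xi,\eta)=(x(\xi,\eta),y(\xi,\eta))$, be a sufficiently smooth ($C^2$) map whose Jacobian $\mathbf{J}=\begin{bmatrix} x_\xi & x_\eta\\ y_\xi & y_\eta\end{bmatrix}$ is nonsingular everywhere on $[-1,1]^2$. Let $F(-1,\cdot)$ and $F(\cdot,-1)$ be given differentiable functions on $[-1,1]$ (transformed Dirichlet data on the edges $\xi=-1$ and $\eta=-1$) agreeing at the corner $(-1,-1)$, and let $u_{nBC}$, $u_{nCD}$ be given differentiable Neumann data on the images of the edges $\xi=1$ and $\eta=1$. Define $S_{BC},T_{BC},S_{CD},T_{CD}$, the flags $\lambda_B,\lambda_C,\lambda_D$, the corner quantities, the polynomials $\rho_0,\rho_1,\upsilon_0,\upsilon_1,\omega_1$ and the operators $Pg$, $PF^g$ as in the context. Assume the compatibility conditions: if $\lambda_B=0$ then $F_\xi(1,-1)=T_{BC}(-1)$; if $\lambda_D=0$ then $F_\eta(-1,1)=T_{CD}(-1)$; if $\lambda_C=0$ then $T_{CD}'(1)-S_{CD}'(1)F^a_\xi(1,1)=T_{BC}'(1)-S_{BC}'(1)F^a_\eta(1,1)$. Then for every sufficiently differentiable $g:[-1,1]^2\to\mathbb{R}$, the function $V=g-Pg+PF^g$ satisfies, for all $\xi,\eta\in[-1,1]$, $V(-1,\eta)=F(-1,\eta)$, $V(\xi,-1)=F(\xi,-1)$, $$V_\xi(1,\eta)+S_{BC}(\eta)V_\eta(1,\eta)=T_{BC}(\eta),\qquad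 V_\eta(\xi,1)+S_{CD}(\xi)V_\xi(\xi,1)=T_{CD}(\xi).$$
   Context: Setting: a curved quadrilateral $ABCD$ is the image of $[-1,1]^2$ under $\mathbf{x}$, with $A=\mathbf{x}(-1,-1)$, $B=\mathbf{x}(1,-1)$, $C=\mathbf{x}(1,1)$, $D=\mathbf{x}(-1,1)$; edges $AB:\eta=-1$, $BC:\xi=1$, $CD:\eta=1$, $AD:\xi=-1$. A field $u$ is represented as $V(\xi,\eta)=u(\mathbf{x}(\xi,\eta))$; Dirichlet conditions on $AB$, $AD$ and Neumann conditions $\mathbf n\cdot\nabla u=u_{nBC}$ on $BC$ and $\mathbf n\cdot\nabla u=u_{nCD}$ on $CD$ become the stated conditions on $V$. Notation: $F(1,-1):=F(\xi,-1)|_{\xi=1}$, $F(-1,1):=F(-1,\eta)|_{\eta=1}$, $F(-1,-1)$ the common corner value, $F_\xi(1,-1):=\frac{d}{d\xi}F(\xi,-1)|_{\xi=1}$, $F_\eta(-1,1):=\frac{d}{d\eta}F(-1,\eta)|_{\eta=1}$. Edge coefficients: $S_{BC}(\eta)=-\frac{\mathbf{x}_\xi(1,\eta)\cdot\mathbf{x}_\eta(1,\eta)}{\|\mathbf{x}_\eta(1,\eta)\|^2}$ (equivalently $K_{yBC}/K_{xBC}$ with $K_{xBC}=\|\mathbf{x}_\eta(1,\eta)\|/\det\mathbf{J}(1,\eta)$, $K_{yBC}=-\mathbf{x}_\xi(1,\eta)\cdot\mathbf{x}_\eta(1,\eta)/(\|\mathbf{x}_\eta(1,\eta)\|\det\mathbf{J}(1,\eta))$),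 $T_{BC}(\eta)=u_{nBC}(\mathbf{x}(1,\eta))/K_{xBC}(\eta)$; $K_{xCD}(\xi)=-\frac{\mathbf{x}_\xi(\xi,1)\cdot\mathbf{x}_\eta(\xi,1)}{\|\mathbf{x}_\xi(\xi,1)\|\det\mathbf{J}(\xi,1)}$, $K_{yCD}(\xi)=\frac{\|\mathbf{x}_\xi(\xi,1)\|}{\det\mathbf{J}(\xi,1)}$, $S_{CD}=K_{xCD}/K_{yCD}$, $T_{CD}(\xi)=u_{nCD}(\mathbf{x}(\xi,1))/K_{yCD}(\xi)$. Flags: $\lambda_B=0$ if $\mathbf{x}_\xi(1,-1)\cdot\mathbf{x}_\eta(1,-1)=0$, else $1$; $\lambda_C=0$ if $\mathbf{x}_\xi(1,1)\cdot\mathbf{x}_\eta(1,1)=0$, else $1$; $\lambda_D=0$ if $\mathbf{x}_\xi(-1,1)\cdot\mathbf{x}_\eta(-1,1)=0$, else $1$. Any term multiplied by a flag equal to $0$ is taken to be $0$ (so quantities only defined when the flag is $1$ are never needed otherwise). Corner quantities: $F^a_\eta(1,-1)=\frac{T_{BC}(-1)-F_\xi(1,-1)}{S_{BC}(-1)}$ (if $\lambda_B=1$); $F^a_\xi(-1,1)=\frac{T_{CD}(-1)-F_\eta(-1,1)}{S_{CD}(-1)}$ (if $\lambda_D=1$); $F^a_\xi(1,1)=\frac{T_{BC}(1)-S_{BC}(1)T_{CD}(1)}{1-S_{BC}(1)S_{CD}(1)}$, $F^a_\eta(1,1)=\frac{T_{CD}(1)-S_{CD}(1)T_{BC}(1)}{1-S_{BC}(1)S_{CD}(1)}$;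 $R_C=[T_{CD}'(1)-S_{CD}'(1)F^a_\xi(1,1)]-[T_{BC}'(1)-S_{BC}'(1)F^a_\eta(1,1)]$; $F^g_{\xi\xi}(1,1)=\frac{S_{BC}(1)}{S_{CD}(1)}g_{\eta\eta}(1,1)+\frac{R_C}{S_{CD}(1)}$ (if $\lambda_C=1$); $F^g_{\xi\eta}(1,1)=T_{BC}'(1)-S_{BC}'(1)F^a_\eta(1,1)-S_{BC}(1)g_{\eta\eta}(1,1)$. Polynomials with $\phi_0(t)=\tfrac12(1-t)$, $\phi_1(t)=\tfrac12(1+t)$: $\rho_0=\phi_0^3(1+3\phi_1+6\phi_1^2)$, $\rho_1=\phi_1^3(1+3\phi_0+6\phi_0^2)$, $\upsilon_0=2\phi_0^3\phi_1(1+3\phi_1)$, $\upsilon_1=-2\phi_1^3\phi_0(1+3\phi_0)$, $\omega_1=2\phi_1^3\phi_0^2$. $F^g_\xi(1,\eta)=T_{BC}(\eta)-S_{BC}(\eta)\{g_\eta(1,\eta)-[g(1,-1)-F(1,-1)]\rho_0'(\eta)-[g_\eta(1,1)-F^a_\eta(1,1)]\upsilon_1'(\eta)-\lambda_B[g_\eta(1,-1)-F^a_\eta(1,-1)]\upsilon_0'(\eta)\}$; $F^g_\eta(\xi,1)=T_{CD}(\xi)-S_{CD}(\xi)\{g_\xi(\xi,1)-[g(-1,1)-F(-1,1)]\rho_0'(\xi)-[g_\xi(1,1)-F^a_\xi(1,1)]\upsilon_1'(\xi)-\lambda_D[g_\xi(-1,1)-F^a_\xi(-1,1)]\upsilon_0'(\xi)-\lambda_C[g_{\xi\xi}(1,1)-F^g_{\xi\xi}(1,1)]\omega_1'(\xi)\}$.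 $Pg(\xi,\eta)=g(-1,\eta)\rho_0(\xi)+g_\xi(1,\eta)\upsilon_1(\xi)+g(\xi,-1)\rho_0(\eta)+g_\eta(\xi,1)\upsilon_1(\eta)-[g(-1,-1)\rho_0(\eta)+g_\eta(-1,1)\upsilon_1(\eta)]\rho_0(\xi)-[g_\xi(1,-1)\rho_0(\eta)+g_{\xi\eta}(1,1)\upsilon_1(\eta)]\upsilon_1(\xi)+\lambda_Bg_\eta(1,-1)\upsilon_0(\eta)\rho_1(\xi)+[\lambda_Dg_\xi(-1,1)\upsilon_0(\xi)+\lambda_Cg_{\xi\xi}(1,1)\omega_1(\xi)]\rho_1(\eta)$. $PF^g(\xi,\eta)=F(-1,\eta)\rho_0(\xi)+F^g_\xi(1,\eta)\upsilon_1(\xi)+F(\xi,-1)\rho_0(\eta)+F^g_\eta(\xi,1)\upsilon_1(\eta)-[F(-1,-1)\rho_0(\eta)+F_\eta(-1,1)\upsilon_1(\eta)]\rho_0(\xi)-[F_\xi(1,-1)\rho_0(\eta)+F^g_{\xi\eta}(1,1)\upsilon_1(\eta)]\upsilon_1(\xi)+\lambda_BF^a_\eta(1,-1)\upsilon_0(\eta)\rho_1(\xi)+[\lambda_DF^a_\xi(-1,1)\upsilon_0(\xi)+\lambda_CF^g_{\xi\xi}(1,1)\omega_1(\xi)]\rho_1(\eta)$. *)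

theory Defs
  imports "HOL-Analysis.Analysis"
begin

definition pxi :: "(real \<Rightarrow> real \<Rightarrow> real) \<Rightarrow> real \<Rightarrow> real \<Rightarrow> real" where
  "pxi f a b = deriv (\<lambda>s. f s b) a"

definition peta :: "(real \<Rightarrow> real \<Rightarrow> real) \<Rightarrow> real \<Rightarrow> real \<Rightarrow> real" where
  "peta f a b = deriv (\<lambda>t. f a t) b"

definition C1_on :: "(real \<times> real) set \<Rightarrow> (real \<Rightarrow> real \<Rightarrow> real) \<Rightarrow> bool" where
  "C1_on U f \<longleftrightarrow>
     (\<forall>a b. (a, b) \<in> U \<longrightarrow> (\<lambda>s. f s b) differentiable (at a) \<and> (\<lambda>t. f a t) differentiable (at b)) \<and>
     continuous_on U (\<lambda>p. f (fst p) (snd p)) \<and>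
     continuous_on U (\<lambda>p. pxi f (fst p) (snd p)) \<and>
     continuous_on U (\<lambda>p. peta f (fst p) (snd p))"

definition C2_on :: "(real \<times> real) set \<Rightarrow> (real \<Rightarrow> real \<Rightarrow> real) \<Rightarrow> bool" where
  "C2_on U f \<longleftrightarrow> C1_on U f \<and> C1_on U (pxi f) \<and> C1_on U (peta f)"

definition dotJ :: "(real \<Rightarrow> real \<Rightarrow> real) \<Rightarrow> (real \<Rightarrow> real \<Rightarrow> real) \<Rightarrow> real \<Rightarrow> real \<Rightarrow> real" where
  "dotJ X Y a b = pxi X a b * peta X a b + pxi Y a b * peta Y a b"

definition nxi2 :: "(real \<Rightarrow> real \<Rightarrow> real) \<Rightarrow> (real \<Rightarrow> real \<Rightarrow> real) \<Rightarrow> real \<Rightarrow> real \<Rightarrow> real" where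
  "nxi2 X Y a b = (pxi X a b)\<^sup>2 + (pxi Y a b)\<^sup>2"

definition neta2 :: "(real \<Rightarrow> real \<Rightarrow> real) \<Rightarrow> (real \<Rightarrow> real \<Rightarrow> real) \<Rightarrow> real \<Rightarrow> real \<Rightarrow> real" where
  "neta2 X Y a b = (peta X a b)\<^sup>2 + (peta Y a b)\<^sup>2"

definition detJ :: "(real \<Rightarrow> real \<Rightarrow> real) \<Rightarrow> (real \<Rightarrow> real \<Rightarrow> real) \<Rightarrow> real \<Rightarrow> real \<Rightarrow> real" where
  "detJ X Y a b = pxi X a b * peta Y a b - peta X a b * pxi Y a b"

definition S_BC :: "(real \<Rightarrow> real \<Rightarrow> real) \<Rightarrow> (real \<Rightarrow> real \<Rightarrow> real) \<Rightarrow> real \<Rightarrow> real" where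
  "S_BC X Y \<eta> = - dotJ X Y 1 \<eta> / neta2 X Y 1 \<eta>"

definition KxBC :: "(real \<Rightarrow> real \<Rightarrow> real) \<Rightarrow> (real \<Rightarrow> real \<Rightarrow> real) \<Rightarrow> real \<Rightarrow> real" where
  "KxBC X Y \<eta> = sqrt (neta2 X Y 1 \<eta>) / detJ X Y 1 \<eta>"

definition T_BC :: "(real \<Rightarrow> real \<Rightarrow> real) \<Rightarrow> (real \<Rightarrow> real \<Rightarrow> real) \<Rightarrow> (real \<times> real \<Rightarrow> real) \<Rightarrow> real \<Rightarrow> real" where
  "T_BC X Y unBC \<eta> = unBC (X 1 \<eta>, Y 1 \<eta>) / KxBC X Y \<eta>"

definition KxCD :: "(real \<Rightarrow> real \<Rightarrow> real) \<Rightarrow> (real \<Rightarrow> real \<Rightarrow> real) \<Rightarrow> real \<Rightarrow> real" where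
  "KxCD X Y \<xi> = - dotJ X Y \<xi> 1 / (sqrt (nxi2 X Y \<xi> 1) * detJ X Y \<xi> 1)"

definition KyCD :: "(real \<Rightarrow> real \<Rightarrow> real) \<Rightarrow> (real \<Rightarrow> real \<Rightarrow> real) \<Rightarrow> real \<Rightarrow> real" where
  "KyCD X Y \<xi> = sqrt (nxi2 X Y \<xi> 1) / detJ X Y \<xi> 1"

definition S_CD :: "(real \<Rightarrow> real \<Rightarrow> real) \<Rightarrow> (real \<Rightarrow> real \<Rightarrow> real) \<Rightarrow> real \<Rightarrow> real" where
  "S_CD X Y \<xi> = KxCD X Y \<xi> / KyCD X Y \<xi>"

definition T_CD :: "(real \<Rightarrow> real \<Rightarrow> real) \<Rightarrow> (real \<Rightarrow> real \<Rightarrow> real) \<Rightarrow> (real \<times> real \<Rightarrow> real) \<Rightarrow> real \<Rightarrow> real" where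
  "T_CD X Y unCD \<xi> = unCD (X \<xi> 1, Y \<xi> 1) / KyCD X Y \<xi>"

definition lamB :: "(real \<Rightarrow> real \<Rightarrow> real) \<Rightarrow> (real \<Rightarrow> real \<Rightarrow> real) \<Rightarrow> real" where
  "lamB X Y = (if dotJ X Y 1 (-1) = 0 then 0 else 1)"

definition lamC :: "(real \<Rightarrow> real \<Rightarrow> real) \<Rightarrow> (real \<Rightarrow> real \<Rightarrow> real) \<Rightarrow> real" where
  "lamC X Y = (if dotJ X Y 1 1 = 0 then 0 else 1)"

definition lamD :: "(real \<Rightarrow> real \<Rightarrow> real) \<Rightarrow> (real \<Rightarrow> real \<Rightarrow> real) \<Rightarrow> real" where
  "lamD X Y = (if dotJ X Y (-1) 1 = 0 then 0 else 1)"

(* Corner quantities.  FL = F(-1,.), FB = F(.,-1). *)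
definition FaEtaB :: "(real \<Rightarrow> real \<Rightarrow> real) \<Rightarrow> (real \<Rightarrow> real \<Rightarrow> real) \<Rightarrow> (real \<times> real \<Rightarrow> real) \<Rightarrow> (real \<Rightarrow> real) \<Rightarrow> real" where
  "FaEtaB X Y unBC FB = (T_BC X Y unBC (-1) - deriv FB 1) / S_BC X Y (-1)"

definition FaXiD :: "(real \<Rightarrow> real \<Rightarrow> real) \<Rightarrow> (real \<Rightarrow> real \<Rightarrow> real) \<Rightarrow> (real \<times> real \<Rightarrow> real) \<Rightarrow> (real \<Rightarrow> real) \<Rightarrow> real" where
  "FaXiD X Y unCD FL = (T_CD X Y unCD (-1) - deriv FL 1) / S_CD X Y (-1)"

definition FaXiC :: "(real \<Rightarrow> real \<Rightarrow> real) \<Rightarrow> (real \<Rightarrow> real \<Rightarrow> real) \<Rightarrow> (real \<times> real \<Rightarrow> real) \<Rightarrow> (real \<times> real \<Rightarrow> real) \<Rightarrow> real" where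
  "FaXiC X Y unBC unCD =
     (T_BC X Y unBC 1 - S_BC X Y 1 * T_CD X Y unCD 1) / (1 - S_BC X Y 1 * S_CD X Y 1)"

definition FaEtaC :: "(real \<Rightarrow> real \<Rightarrow> real) \<Rightarrow> (real \<Rightarrow> real \<Rightarrow> real) \<Rightarrow> (real \<times> real \<Rightarrow> real) \<Rightarrow> (real \<times> real \<Rightarrow> real) \<Rightarrow> real" where
  "FaEtaC X Y unBC unCD =
     (T_CD X Y unCD 1 - S_CD X Y 1 * T_BC X Y unBC 1) / (1 - S_BC X Y 1 * S_CD X Y 1)"

definition RC :: "(real \<Rightarrow> real \<Rightarrow> real) \<Rightarrow> (real \<Rightarrow> real \<Rightarrow> real) \<Rightarrow> (real \<times> real \<Rightarrow> real) \<Rightarrow> (real \<times> real \<Rightarrow> real) \<Rightarrow> real" where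
  "RC X Y unBC unCD =
     (deriv (T_CD X Y unCD) 1 - deriv (S_CD X Y) 1 * FaXiC X Y unBC unCD)
   - (deriv (T_BC X Y unBC) 1 - deriv (S_BC X Y) 1 * FaEtaC X Y unBC unCD)"

definition FgXiXi :: "(real \<Rightarrow> real \<Rightarrow> real) \<Rightarrow> (real \<Rightarrow> real \<Rightarrow> real) \<Rightarrow> (real \<times> real \<Rightarrow> real) \<Rightarrow> (real \<times> real \<Rightarrow> real) \<Rightarrow> (real \<Rightarrow> real \<Rightarrow> real) \<Rightarrow> real" where
  "FgXiXi X Y unBC unCD g =
     S_BC X Y 1 / S_CD X Y 1 * peta (peta g) 1 1 + RC X Y unBC unCD / S_CD X Y 1"

definition FgXiEta :: "(real \<Rightarrow> real \<Rightarrow> real) \<Rightarrow> (real \<Rightarrow> real \<Rightarrow> real) \<Rightarrow> (real \<times> real \<Rightarrow> real) \<Rightarrow> (real \<times> real \<Rightarrow> real) \<Rightarrow> (real \<Rightarrow> real \<Rightarrow> real) \<Rightarrow> real" where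
  "FgXiEta X Y unBC unCD g =
     deriv (T_BC X Y unBC) 1 - deriv (S_BC X Y) 1 * FaEtaC X Y unBC unCD
     - S_BC X Y 1 * peta (peta g) 1 1"

definition phi0 :: "real \<Rightarrow> real" where "phi0 t = (1 - t) / 2"
definition phi1 :: "real \<Rightarrow> real" where "phi1 t = (1 + t) / 2"
definition rho0 :: "real \<Rightarrow> real" where
  "rho0 t = phi0 t ^ 3 * (1 + 3 * phi1 t + 6 * (phi1 t)\<^sup>2)"
definition rho1 :: "real \<Rightarrow> real" where
  "rho1 t = phi1 t ^ 3 * (1 + 3 * phi0 t + 6 * (phi0 t)\<^sup>2)"
definition ups0 :: "real \<Rightarrow> real" where
  "ups0 t = 2 * phi0 t ^ 3 * phi1 t * (1 + 3 * phi1 t)"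
definition ups1 :: "real \<Rightarrow> real" where
  "ups1 t = - 2 * phi1 t ^ 3 * phi0 t * (1 + 3 * phi0 t)"
definition om1 :: "real \<Rightarrow> real" where
  "om1 t = 2 * phi1 t ^ 3 * (phi0 t)\<^sup>2"

definition FgXi :: "(real \<Rightarrow> real \<Rightarrow> real) \<Rightarrow> (real \<Rightarrow> real \<Rightarrow> real) \<Rightarrow> (real \<times> real \<Rightarrow> real) \<Rightarrow> (real \<times> real \<Rightarrow> real) \<Rightarrow> (real \<Rightarrow> real) \<Rightarrow> (real \<Rightarrow> real \<Rightarrow> real) \<Rightarrow> real \<Rightarrow> real" where
  "FgXi X Y unBC unCD FB g \<eta> =
     T_BC X Y unBC \<eta> - S_BC X Y \<eta> *
       (peta g 1 \<eta> - (g 1 (-1) - FB 1) * deriv rho0 \<eta>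
        - (peta g 1 1 - FaEtaC X Y unBC unCD) * deriv ups1 \<eta>
        - lamB X Y * (peta g 1 (-1) - FaEtaB X Y unBC FB) * deriv ups0 \<eta>)"

definition FgEta :: "(real \<Rightarrow> real \<Rightarrow> real) \<Rightarrow> (real \<Rightarrow> real \<Rightarrow> real) \<Rightarrow> (real \<times> real \<Rightarrow> real) \<Rightarrow> (real \<times> real \<Rightarrow> real) \<Rightarrow> (real \<Rightarrow> real) \<Rightarrow> (real \<Rightarrow> real \<Rightarrow> real) \<Rightarrow> real \<Rightarrow> real" where
  "FgEta X Y unBC unCD FL g \<xi> =
     T_CD X Y unCD \<xi> - S_CD X Y \<xi> *
       (pxi g \<xi> 1 - (g (-1) 1 - FL 1) * deriv rho0 \<xi>
        - (pxi g 1 1 - FaXiC X Y unBC unCD) * deriv ups1 \<xi>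
        - lamD X Y * (pxi g (-1) 1 - FaXiD X Y unCD FL) * deriv ups0 \<xi>
        - lamC X Y * (pxi (pxi g) 1 1 - FgXiXi X Y unBC unCD g) * deriv om1 \<xi>)"

(* Pg; g_{xi eta}(1,1) is taken as d/deta of g_xi *)
definition Pg :: "(real \<Rightarrow> real \<Rightarrow> real) \<Rightarrow> (real \<Rightarrow> real \<Rightarrow> real) \<Rightarrow> (real \<Rightarrow> real \<Rightarrow> real) \<Rightarrow> real \<Rightarrow> real \<Rightarrow> real" where
  "Pg X Y g \<xi> \<eta> =
     g (-1) \<eta> * rho0 \<xi> + pxi g 1 \<eta> * ups1 \<xi> + g \<xi> (-1) * rho0 \<eta> + peta g \<xi> 1 * ups1 \<eta>
     - (g (-1) (-1) * rho0 \<eta> + peta g (-1) 1 * ups1 \<eta>) * rho0 \<xi>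
     - (pxi g 1 (-1) * rho0 \<eta> + peta (pxi g) 1 1 * ups1 \<eta>) * ups1 \<xi>
     + lamB X Y * peta g 1 (-1) * ups0 \<eta> * rho1 \<xi>
     + (lamD X Y * pxi g (-1) 1 * ups0 \<xi> + lamC X Y * pxi (pxi g) 1 1 * om1 \<xi>) * rho1 \<eta>"

definition PFg :: "(real \<Rightarrow> real \<Rightarrow> real) \<Rightarrow> (real \<Rightarrow> real \<Rightarrow> real) \<Rightarrow> (real \<times> real \<Rightarrow> real) \<Rightarrow> (real \<times> real \<Rightarrow> real) \<Rightarrow> (real \<Rightarrow> real) \<Rightarrow> (real \<Rightarrow> real) \<Rightarrow> (real \<Rightarrow> real \<Rightarrow> real) \<Rightarrow> real \<Rightarrow> real \<Rightarrow> real" where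
  "PFg X Y unBC unCD FL FB g \<xi> \<eta> =
     FL \<eta> * rho0 \<xi> + FgXi X Y unBC unCD FB g \<eta> * ups1 \<xi> + FB \<xi> * rho0 \<eta>
     + FgEta X Y unBC unCD FL g \<xi> * ups1 \<eta>
     - (FL (-1) * rho0 \<eta> + deriv FL 1 * ups1 \<eta>) * rho0 \<xi>
     - (deriv FB 1 * rho0 \<eta> + FgXiEta X Y unBC unCD g * ups1 \<eta>) * ups1 \<xi>
     + lamB X Y * FaEtaB X Y unBC FB * ups0 \<eta> * rho1 \<xi>
     + (lamD X Y * FaXiD X Y unCD FL * ups0 \<xi> + lamC X Y * FgXiXi X Y unBC unCD g * om1 \<xi>) * rho1 \<eta>"

definition Vfun :: "(real \<Rightarrow> real \<Rightarrow> real) \<Rightarrow> (real \<Rightarrow> real \<Rightarrow> real) \<Rightarrow> (real \<times> real \<Rightarrow> real) \<Rightarrow> (real \<times> real \<Rightarrow> real) \<Rightarrow> (real \<Rightarrow> real) \<Rightarrow> (real \<Rightarrow> real) \<Rightarrow> (real \<Rightarrow> real \<Rightarrow> real) \<Rightarrow> real \<Rightarrow> real \<Rightarrow> real" where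
  "Vfun X Y unBC unCD FL FB g \<xi> \<eta> =
     g \<xi> \<eta> - Pg X Y g \<xi> \<eta> + PFg X Y unBC unCD FL FB g \<xi> \<eta>"

end

theory Submission
  imports Defs
begin


lemma C1_pxi: "C1_on U f \<Longrightarrow> (a,b)\<in>U \<Longrightarrow> ((\<lambda>s. f s b) has_real_derivative pxi f a b) (at a)"
  unfolding C1_on_def pxi_def using DERIV_deriv_iff_real_differentiable by blast
lemma C1_peta: "C1_on U f \<Longrightarrow> (a,b)\<in>U \<Longrightarrow> ((\<lambda>t. f a t) has_real_derivative peta f a b) (at b)"
  unfolding C1_on_def peta_def using DERIV_deriv_iff_real_differentiable by blast

lemma dist_box: "\<bar>s-a\<bar> \<le> h \<Longrightarrow> \<bar>t-b\<bar> \<le> h \<Longrightarrow> dist (s,t) (a::real,b::real) \<le> 2*h"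
proof -
  assume "\<bar>s-a\<bar> \<le> h" "\<bar>t-b\<bar> \<le> h"
  moreover have "dist (s,t) (a,b) \<le> \<bar>s-a\<bar> + \<bar>t-b\<bar>"
    unfolding dist_Pair_Pair dist_real_def using sqrt_sum_squares_le_sum_abs[of "s-a" "t-b"] by simp
  ultimately show ?thesis by linarith
qed

lemma cont_eps:
  fixes f :: "real \<Rightarrow> real \<Rightarrow> real"
  assumes "open W" "(a,b) \<in> W" "continuous_on W (\<lambda>p. f (fst p) (snd p))" "e > 0"
  shows "\<exists>d>0. \<forall>s t. dist (s,t) (a,b) < d \<longrightarrow> \<bar>f s t - f a b\<bar> < e"
proof -
  have "isCont (\<lambda>p. f (fst p) (snd p)) (a,b)" using assms continuous_on_eq_continuous_at by blast
  then obtain d where "d>0" "\<forall>x'. dist x' (a,b) < d \<longrightarrow> dist (f (fst x') (snd x')) (f a b) < e"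
    using assms(4) unfolding continuous_at_eps_delta by fastforce
  then show ?thesis by (metis dist_real_def fst_conv snd_conv)
qed

lemma triv_abs: "\<bar>x - B\<bar> < \<bar>A-B\<bar>/2 \<Longrightarrow> \<bar>y - A\<bar> < \<bar>A-B\<bar>/2 \<Longrightarrow> x = y \<Longrightarrow> False" for x y A B :: real
  by (simp add: abs_if split: if_splits)

lemma schwarz:
  assumes W: "open W" "(a,b) \<in> W" and C2: "C2_on W g"
  shows "pxi (peta g) a b = peta (pxi g) a b"
proof (rule ccontr)
  assume ne: "pxi (peta g) a b \<noteq> peta (pxi g) a b"
  define e where "e = \<bar>pxi (peta g) a b - peta (pxi g) a b\<bar> / 2"
  have e: "e > 0" using ne unfolding e_def by auto
  have c1: "C1_on W g" "C1_on W (pxi g)" "C1_on W (peta g)" using C2 unfolding C2_on_def by auto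
  obtain d1 where d1: "d1 > 0" "\<And>s t. dist (s,t) (a,b) < d1 \<Longrightarrow> \<bar>pxi (peta g) s t - pxi (peta g) a b\<bar> < e"
    using cont_eps[OF W, of "pxi (peta g)", OF _ e] c1(3) unfolding C1_on_def by blast
  obtain d2 where d2: "d2 > 0" "\<And>s t. dist (s,t) (a,b) < d2 \<Longrightarrow> \<bar>peta (pxi g) s t - peta (pxi g) a b\<bar> < e"
    using cont_eps[OF W, of "peta (pxi g)", OF _ e] c1(2) unfolding C1_on_def by blast
  obtain d3 where d3: "d3 > 0" "ball (a,b) d3 \<subseteq> W" using W openE by blast
  define h where "h = min d1 (min d2 d3) / 4"
  have h: "h > 0" using d1 d2 d3 unfolding h_def by simp
  have inb: "\<And>s t. a \<le> s \<Longrightarrow> s \<le> a + h \<Longrightarrow> b \<le> t \<Longrightarrow> t \<le> b + h \<Longrightarrow>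
     dist (s,t) (a,b) < d1 \<and> dist (s,t) (a,b) < d2 \<and> (s,t) \<in> W"
  proof -
    fix s t assume "a \<le> s" "s \<le> a + h" "b \<le> t" "t \<le> b + h"
    then have "dist (s,t) (a,b) \<le> 2*h" by (intro dist_box) auto
    moreover have "2*h < d1" "2*h < d2" "2*h < d3" using d1 d2 d3 unfolding h_def by auto
    ultimately show "dist (s,t) (a,b) < d1 \<and> dist (s,t) (a,b) < d2 \<and> (s,t) \<in> W"
      using d3(2) by (auto simp: dist_commute)
  qed
  define D where "D = g (a+h) (b+h) - g (a+h) b - g a (b+h) + g a b"
  have der1: "\<And>x. a \<le> x \<Longrightarrow> x \<le> a+h \<Longrightarrow> ((\<lambda>s. g s (b+h) - g s b) has_real_derivative pxi g x (b+h) - pxi g x b) (at x)"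
  proof -
    fix x assume x: "a \<le> x" "x \<le> a+h"
    have "(x,b+h) \<in> W" "(x,b) \<in> W" using inb[of x "b+h"] inb[of x b] x h by auto
    then show "((\<lambda>s. g s (b+h) - g s b) has_real_derivative pxi g x (b+h) - pxi g x b) (at x)"
      by (intro DERIV_diff C1_pxi[OF c1(1)])
  qed
  obtain s1 where s1: "a < s1" "s1 < a + h"
    "(g (a+h) (b+h) - g (a+h) b) - (g a (b+h) - g a b) = ((a+h) - a) * (pxi g s1 (b+h) - pxi g s1 b)"
    using MVT2[of a "a+h", OF _ der1] h by auto
  have der2: "\<And>x. b \<le> x \<Longrightarrow> x \<le> b+h \<Longrightarrow> ((\<lambda>t. pxi g s1 t) has_real_derivative peta (pxi g) s1 x) (at x)"
  proof -
    fix x assume x: "b \<le> x" "x \<le> b+h"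
    have "(s1,x) \<in> W" using inb[of s1 x] x s1 by auto
    then show "((\<lambda>t. pxi g s1 t) has_real_derivative peta (pxi g) s1 x) (at x)"
      by (intro C1_peta[OF c1(2)])
  qed
  obtain t1 where t1: "b < t1" "t1 < b + h"
    "pxi g s1 (b+h) - pxi g s1 b = ((b+h) - b) * peta (pxi g) s1 t1"
    using MVT2[of b "b+h", OF _ der2] h by auto
  have der3: "\<And>x. b \<le> x \<Longrightarrow> x \<le> b+h \<Longrightarrow> ((\<lambda>t. g (a+h) t - g a t) has_real_derivative peta g (a+h) x - peta g a x) (at x)"
  proof -
    fix x assume x: "b \<le> x" "x \<le> b+h"
    have "(a+h,x) \<in> W" "(a,x) \<in> W" using inb[of "a+h" x] inb[of a x] x h by auto
    then show "((\<lambda>t. g (a+h) t - g a t) has_real_derivative peta g (a+h) x - peta g a x) (at x)"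
      by (intro DERIV_diff C1_peta[OF c1(1)])
  qed
  obtain t2 where t2: "b < t2" "t2 < b + h"
    "(g (a+h) (b+h) - g a (b+h)) - (g (a+h) b - g a b) = ((b+h) - b) * (peta g (a+h) t2 - peta g a t2)"
    using MVT2[of b "b+h", OF _ der3] h by auto
  have der4: "\<And>x. a \<le> x \<Longrightarrow> x \<le> a+h \<Longrightarrow> ((\<lambda>s. peta g s t2) has_real_derivative pxi (peta g) x t2) (at x)"
  proof -
    fix x assume x: "a \<le> x" "x \<le> a+h"
    have "(x,t2) \<in> W" using inb[of x t2] x t2 by auto
    then show "((\<lambda>s. peta g s t2) has_real_derivative pxi (peta g) x t2) (at x)"
      by (intro C1_pxi[OF c1(3)])
  qed
  obtain s2 where s2: "a < s2" "s2 < a + h"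
    "peta g (a+h) t2 - peta g a t2 = ((a+h) - a) * pxi (peta g) s2 t2"
    using MVT2[of a "a+h", OF _ der4] h by auto
  have "h * h * peta (pxi g) s1 t1 = h * h * pxi (peta g) s2 t2"
    using s1(3) t1(3) t2(3) s2(3) by (simp add: algebra_simps)
  then have eq: "peta (pxi g) s1 t1 = pxi (peta g) s2 t2" using h by simp
  have "\<bar>peta (pxi g) s1 t1 - peta (pxi g) a b\<bar> < e" using d2(2) inb[of s1 t1] s1 t1 by auto
  moreover have "\<bar>pxi (peta g) s2 t2 - pxi (peta g) a b\<bar> < e" using d1(2) inb[of s2 t2] s2 t2 by auto
  ultimately show False using eq triv_abs unfolding e_def by blast
qed


definition "drho0 t = (-15/16 + 15/8*t^2 - 15/16*t^4 :: real)"
definition "ddrho0 t = (15/4*t - 15/4*t^3 :: real)"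
definition "drho1 t = (15/16 - 15/8*t^2 + 15/16*t^4 :: real)"
definition "dups0 t = (-7/16 - 3/4*t + 15/8*t^2 + 1/4*t^3 - 15/16*t^4 :: real)"
definition "ddups0 t = (-3/4 + 15/4*t + 3/4*t^2 - 15/4*t^3 :: real)"
definition "dups1 t = (-7/16 + 3/4*t + 15/8*t^2 - 1/4*t^3 - 15/16*t^4 :: real)"
definition "ddups1 t = (3/4 + 15/4*t - 3/4*t^2 - 15/4*t^3 :: real)"
definition "dom1 t = (1/16 - 1/4*t - 3/8*t^2 + 1/4*t^3 + 5/16*t^4 :: real)"
definition "ddom1 t = (-1/4 - 3/4*t + 3/4*t^2 + 5/4*t^3 :: real)"

lemma rho0_eq: "rho0 = (\<lambda>t. 1/2 - 15/16*t + 5/8*t^3 - 3/16*t^5)"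
  by (rule ext) (simp add: rho0_def phi0_def phi1_def power2_eq_square power3_eq_cube eval_nat_numeral field_simps)
lemma rho1_eq: "rho1 = (\<lambda>t. 1/2 + 15/16*t - 5/8*t^3 + 3/16*t^5)"
  by (rule ext) (simp add: rho1_def phi0_def phi1_def power2_eq_square power3_eq_cube eval_nat_numeral field_simps)
lemma ups0_eq: "ups0 = (\<lambda>t. 5/16 - 7/16*t - 3/8*t^2 + 5/8*t^3 + 1/16*t^4 - 3/16*t^5)"
  by (rule ext) (simp add: ups0_def phi0_def phi1_def power2_eq_square power3_eq_cube eval_nat_numeral field_simps)
lemma ups1_eq: "ups1 = (\<lambda>t. -5/16 - 7/16*t + 3/8*t^2 + 5/8*t^3 - 1/16*t^4 - 3/16*t^5)"
  by (rule ext) (simp add: ups1_def phi0_def phi1_def power2_eq_square power3_eq_cube eval_nat_numeral field_simps)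
lemma om1_eq: "om1 = (\<lambda>t. 1/16 + 1/16*t - 1/8*t^2 - 1/8*t^3 + 1/16*t^4 + 1/16*t^5)"
  by (rule ext) (simp add: om1_def phi0_def phi1_def power2_eq_square power3_eq_cube eval_nat_numeral field_simps)

lemma D_rho0: "(rho0 has_real_derivative drho0 t) (at t)"
  unfolding rho0_eq drho0_def by (auto intro!: derivative_eq_intros simp: field_simps eval_nat_numeral)
lemma D_rho1: "(rho1 has_real_derivative drho1 t) (at t)"
  unfolding rho1_eq drho1_def by (auto intro!: derivative_eq_intros simp: field_simps eval_nat_numeral)
lemma D_ups0: "(ups0 has_real_derivative dups0 t) (at t)"
  unfolding ups0_eq dups0_def by (auto intro!: derivative_eq_intros simp: field_simps eval_nat_numeral)
lemma D_ups1: "(ups1 has_real_derivative dups1 t) (at t)"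
  unfolding ups1_eq dups1_def by (auto intro!: derivative_eq_intros simp: field_simps eval_nat_numeral)
lemma D_om1: "(om1 has_real_derivative dom1 t) (at t)"
  unfolding om1_eq dom1_def by (auto intro!: derivative_eq_intros simp: field_simps eval_nat_numeral)
lemma D_drho0: "(drho0 has_real_derivative ddrho0 t) (at t)"
  unfolding drho0_def[abs_def] ddrho0_def by (auto intro!: derivative_eq_intros simp: field_simps eval_nat_numeral)
lemma D_dups0: "(dups0 has_real_derivative ddups0 t) (at t)"
  unfolding dups0_def[abs_def] ddups0_def by (auto intro!: derivative_eq_intros simp: field_simps eval_nat_numeral)
lemma D_dups1: "(dups1 has_real_derivative ddups1 t) (at t)"
  unfolding dups1_def[abs_def] ddups1_def by (auto intro!: derivative_eq_intros simp: field_simps eval_nat_numeral)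
lemma D_dom1: "(dom1 has_real_derivative ddom1 t) (at t)"
  unfolding dom1_def[abs_def] ddom1_def by (auto intro!: derivative_eq_intros simp: field_simps eval_nat_numeral)

lemma deriv_polys: "deriv rho0 = drho0" "deriv rho1 = drho1" "deriv ups0 = dups0" "deriv ups1 = dups1" "deriv om1 = dom1"
  using D_rho0 D_rho1 D_ups0 D_ups1 D_om1 by (auto intro!: ext DERIV_imp_deriv)

lemma polyvals:
  "rho0 (-1) = 1" "rho0 1 = 0" "rho1 (-1) = 0" "rho1 1 = 1"
  "ups0 (-1) = 0" "ups0 1 = 0" "ups1 (-1) = 0" "ups1 1 = 0" "om1 (-1) = 0" "om1 1 = 0"
  "drho0 (-1) = 0" "drho0 1 = 0" "drho1 (-1) = 0" "drho1 1 = 0"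
  "dups0 (-1) = 1" "dups0 1 = 0" "dups1 (-1) = 0" "dups1 1 = 1" "dom1 (-1) = 0" "dom1 1 = 0"
  "ddrho0 1 = 0" "ddups0 1 = 0" "ddups1 1 = 0" "ddom1 1 = 1"
  by (simp_all add: rho0_eq rho1_eq ups0_eq ups1_eq om1_eq drho0_def drho1_def dups0_def dups1_def dom1_def
      ddrho0_def ddups0_def ddups1_def ddom1_def)



lemma neta2_pos: "detJ X Y a b \<noteq> 0 \<Longrightarrow> neta2 X Y a b > 0"
  by (auto simp: neta2_def detJ_def sum_power2_gt_zero_iff)
lemma nxi2_pos: "detJ X Y a b \<noteq> 0 \<Longrightarrow> nxi2 X Y a b > 0"
  by (auto simp: nxi2_def detJ_def sum_power2_gt_zero_iff)

lemma S_CD_eq: "detJ X Y a 1 \<noteq> 0 \<Longrightarrow> S_CD X Y a = - dotJ X Y a 1 / nxi2 X Y a 1"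
proof -
  assume d: "detJ X Y a 1 \<noteq> 0"
  have n: "nxi2 X Y a 1 > 0" using nxi2_pos[OF d] .
  then have s: "sqrt (nxi2 X Y a 1) > 0" by simp
  have ss: "sqrt (nxi2 X Y a 1) * sqrt (nxi2 X Y a 1) = nxi2 X Y a 1" using n by simp
  show ?thesis unfolding S_CD_def KxCD_def KyCD_def using d s n ss
    by (simp add: field_simps)
qed

lemma lagrange: "nxi2 X Y a b * neta2 X Y a b - (dotJ X Y a b)^2 = (detJ X Y a b)^2"
  by (simp add: nxi2_def neta2_def dotJ_def detJ_def power2_eq_square algebra_simps)

lemma denom_ne: "detJ X Y 1 1 \<noteq> 0 \<Longrightarrow> 1 - S_BC X Y 1 * S_CD X Y 1 \<noteq> 0"
proof -
  assume d: "detJ X Y 1 1 \<noteq> 0"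
  have n1: "nxi2 X Y 1 1 > 0" and n2: "neta2 X Y 1 1 > 0" using nxi2_pos[OF d] neta2_pos[OF d] by auto
  have "S_BC X Y 1 * S_CD X Y 1 = (dotJ X Y 1 1)^2 / (nxi2 X Y 1 1 * neta2 X Y 1 1)"
    unfolding S_CD_eq[OF d] S_BC_def by (simp add: power2_eq_square mult.commute)
  moreover have "(dotJ X Y 1 1)^2 \<noteq> nxi2 X Y 1 1 * neta2 X Y 1 1"
    using lagrange[of X Y 1 1] d by auto
  ultimately show ?thesis by (auto simp: divide_eq_1_iff)
qed

lemma diff_sqrt: "(f::real\<Rightarrow>real) differentiable at x \<Longrightarrow> f x > 0 \<Longrightarrow> (\<lambda>t. sqrt (f t)) differentiable at x"
proof -
  assume f: "f differentiable at x" "f x > 0"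
  then obtain D where D: "(f has_real_derivative D) (at x)" using real_differentiable_def by blast
  have "((\<lambda>t. sqrt (f t)) has_real_derivative inverse (sqrt (f x)) / 2 * D) (at x)"
    using DERIV_chain2[OF DERIV_real_sqrt[OF f(2)] D] .
  then show ?thesis using real_differentiable_def by blast
qed

lemma C1_dxi: "C1_on U f \<Longrightarrow> (a,b)\<in>U \<Longrightarrow> (\<lambda>s. f s b) differentiable at a"
  unfolding C1_on_def by blast
lemma C1_deta: "C1_on U f \<Longrightarrow> (a,b)\<in>U \<Longrightarrow> (\<lambda>t. f a t) differentiable at b"
  unfolding C1_on_def by blast

lemma diffBC:
  assumes c: "C1_on U (pxi X)" "C1_on U (peta X)" "C1_on U (pxi Y)" "C1_on U (peta Y)"
    and e: "(1,e) \<in> U" and d: "detJ X Y 1 e \<noteq> 0"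
    and u: "(\<lambda>s. unBC (X 1 s, Y 1 s)) differentiable at e"
  shows "T_BC X Y unBC differentiable at e" "S_BC X Y differentiable at e"
proof -
  have dX: "(\<lambda>t. pxi X 1 t) differentiable at e" "(\<lambda>t. peta X 1 t) differentiable at e"
     "(\<lambda>t. pxi Y 1 t) differentiable at e" "(\<lambda>t. peta Y 1 t) differentiable at e"
    using C1_deta[OF c(1) e] C1_deta[OF c(2) e] C1_deta[OF c(3) e] C1_deta[OF c(4) e] by auto
  have n: "(\<lambda>t. neta2 X Y 1 t) differentiable at e" unfolding neta2_def using dX by (intro derivative_intros) auto
  have dj: "(\<lambda>t. detJ X Y 1 t) differentiable at e" unfolding detJ_def using dX by (intro derivative_intros) auto
  have dd: "(\<lambda>t. dotJ X Y 1 t) differentiable at e" unfolding dotJ_def using dX by (intro derivative_intros) auto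
  have np: "neta2 X Y 1 e > 0" using neta2_pos[OF d] .
  have sq: "(\<lambda>t. sqrt (neta2 X Y 1 t)) differentiable at e" using diff_sqrt[OF n np] .
  have "S_BC X Y = (\<lambda>t. - dotJ X Y 1 t / neta2 X Y 1 t)" by (rule ext) (simp add: S_BC_def)
  then show "S_BC X Y differentiable at e" using dd n np by (auto intro!: derivative_intros)
  have "T_BC X Y unBC = (\<lambda>t. unBC (X 1 t, Y 1 t) / (sqrt (neta2 X Y 1 t) / detJ X Y 1 t))"
    by (rule ext) (simp add: T_BC_def KxBC_def)
  then show "T_BC X Y unBC differentiable at e" using u sq dj d np
    by (auto intro!: derivative_intros)
qed

lemma diffCD:
  assumes c: "C1_on U (pxi X)" "C1_on U (peta X)" "C1_on U (pxi Y)" "C1_on U (peta Y)"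
    and e: "(e,1) \<in> U" and d: "detJ X Y e 1 \<noteq> 0"
    and u: "(\<lambda>s. unCD (X s 1, Y s 1)) differentiable at e"
  shows "T_CD X Y unCD differentiable at e" "S_CD X Y differentiable at e"
proof -
  have dX: "(\<lambda>t. pxi X t 1) differentiable at e" "(\<lambda>t. peta X t 1) differentiable at e"
     "(\<lambda>t. pxi Y t 1) differentiable at e" "(\<lambda>t. peta Y t 1) differentiable at e"
    using C1_dxi[OF c(1) e] C1_dxi[OF c(2) e] C1_dxi[OF c(3) e] C1_dxi[OF c(4) e] by auto
  have n: "(\<lambda>t. nxi2 X Y t 1) differentiable at e" unfolding nxi2_def using dX by (intro derivative_intros) auto
  have dj: "(\<lambda>t. detJ X Y t 1) differentiable at e" unfolding detJ_def using dX by (intro derivative_intros) auto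
  have dd: "(\<lambda>t. dotJ X Y t 1) differentiable at e" unfolding dotJ_def using dX by (intro derivative_intros) auto
  have np: "nxi2 X Y e 1 > 0" using nxi2_pos[OF d] .
  have sq: "(\<lambda>t. sqrt (nxi2 X Y t 1)) differentiable at e" using diff_sqrt[OF n np] .
  have "S_CD X Y = (\<lambda>t. (- dotJ X Y t 1 / (sqrt (nxi2 X Y t 1) * detJ X Y t 1)) / (sqrt (nxi2 X Y t 1) / detJ X Y t 1))"
    by (rule ext) (simp add: S_CD_def KxCD_def KyCD_def)
  then show "S_CD X Y differentiable at e"
    by (simp only:) (intro derivative_intros dd sq dj; use d np in auto)
  have "T_CD X Y unCD = (\<lambda>t. unCD (X t 1, Y t 1) / (sqrt (nxi2 X Y t 1) / detJ X Y t 1))"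
    by (rule ext) (simp add: T_CD_def KyCD_def)
  then show "T_CD X Y unCD differentiable at e" using u sq dj d np
    by (auto intro!: derivative_intros)
qed



theorem mainTheorem2:
  fixes X Y :: "real \<Rightarrow> real \<Rightarrow> real"
    and FL FB :: "real \<Rightarrow> real"
    and unBC unCD :: "real \<times> real \<Rightarrow> real"
    and g :: "real \<Rightarrow> real \<Rightarrow> real"
    and U W :: "(real \<times> real) set"
  assumes U: "open U" "{-1..1} \<times> {-1..1} \<subseteq> U"
    and smoothX: "C2_on U X" and smoothY: "C2_on U Y"
    and nonsing: "\<forall>a\<in>{-1..1}. \<forall>b\<in>{-1..1}. detJ X Y a b \<noteq> 0"
    and FL_diff: "\<forall>t\<in>{-1..1}. FL differentiable (at t)"
    and FB_diff: "\<forall>t\<in>{-1..1}. FB differentiable (at t)"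
    and corner: "FL (-1) = FB (-1)"
    and unBC_diff: "\<forall>t\<in>{-1..1}. (\<lambda>s. unBC (X 1 s, Y 1 s)) differentiable (at t)"
    and unCD_diff: "\<forall>t\<in>{-1..1}. (\<lambda>s. unCD (X s 1, Y s 1)) differentiable (at t)"
    and compatB: "lamB X Y = 0 \<longrightarrow> deriv FB 1 = T_BC X Y unBC (-1)"
    and compatD: "lamD X Y = 0 \<longrightarrow> deriv FL 1 = T_CD X Y unCD (-1)"
    and compatC: "lamC X Y = 0 \<longrightarrow>
        deriv (T_CD X Y unCD) 1 - deriv (S_CD X Y) 1 * FaXiC X Y unBC unCD
      = deriv (T_BC X Y unBC) 1 - deriv (S_BC X Y) 1 * FaEtaC X Y unBC unCD"
    and W: "open W" "{-1..1} \<times> {-1..1} \<subseteq> W"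
    and smooth_g: "C2_on W g"
  shows "\<forall>\<xi>\<in>{-1..1}. \<forall>\<eta>\<in>{-1..1}.
           Vfun X Y unBC unCD FL FB g (-1) \<eta> = FL \<eta>
         \<and> Vfun X Y unBC unCD FL FB g \<xi> (-1) = FB \<xi>
         \<and> pxi (Vfun X Y unBC unCD FL FB g) 1 \<eta>
             + S_BC X Y \<eta> * peta (Vfun X Y unBC unCD FL FB g) 1 \<eta> = T_BC X Y unBC \<eta>
         \<and> peta (Vfun X Y unBC unCD FL FB g) \<xi> 1
             + S_CD X Y \<xi> * pxi (Vfun X Y unBC unCD FL FB g) \<xi> 1 = T_CD X Y unCD \<xi>"
proof -
  have cX: "C1_on U (pxi X)" "C1_on U (peta X)" "C1_on U (pxi Y)" "C1_on U (peta Y)"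
    using smoothX smoothY unfolding C2_on_def by auto
  have cg: "C1_on W g" "C1_on W (pxi g)" "C1_on W (peta g)" using smooth_g unfolding C2_on_def by auto
  have inU: "\<And>a b. a \<in> {-1..1} \<Longrightarrow> b \<in> {-1..1} \<Longrightarrow> (a,b) \<in> U" using U by auto
  have inW: "\<And>a b. a \<in> {-1..1} \<Longrightarrow> b \<in> {-1..1} \<Longrightarrow> (a,b) \<in> W" using W by auto
  have m1: "(-1::real) \<in> {-1..1}" "(1::real) \<in> {-1..1}" by auto
  have det: "\<And>a b. a \<in> {-1..1} \<Longrightarrow> b \<in> {-1..1} \<Longrightarrow> detJ X Y a b \<noteq> 0" using nonsing by auto
  have sch: "pxi (peta g) 1 1 = peta (pxi g) 1 1" using schwarz[OF W(1) inW[OF m1(2) m1(2)] smooth_g] .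
  have dTBC: "(T_BC X Y unBC has_real_derivative deriv (T_BC X Y unBC) 1) (at 1)"
   and dSBC: "(S_BC X Y has_real_derivative deriv (S_BC X Y) 1) (at 1)"
    using diffBC[OF cX inU[OF m1(2) m1(2)] det[OF m1(2) m1(2)] unBC_diff[rule_format, OF m1(2)]]
    by (auto simp: DERIV_deriv_iff_real_differentiable)
  have dTCD: "(T_CD X Y unCD has_real_derivative deriv (T_CD X Y unCD) 1) (at 1)"
   and dSCD: "(S_CD X Y has_real_derivative deriv (S_CD X Y) 1) (at 1)"
    using diffCD[OF cX inU[OF m1(2) m1(2)] det[OF m1(2) m1(2)] unCD_diff[rule_format, OF m1(2)]]
    by (auto simp: DERIV_deriv_iff_real_differentiable)
  have dFL: "(FL has_real_derivative deriv FL 1) (at 1)" using FL_diff m1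
    by (auto simp: DERIV_deriv_iff_real_differentiable)
  have dFB: "(FB has_real_derivative deriv FB 1) (at 1)" using FB_diff m1
    by (auto simp: DERIV_deriv_iff_real_differentiable)
  have den: "1 - S_BC X Y 1 * S_CD X Y 1 \<noteq> 0" using denom_ne det[OF m1(2) m1(2)] by blast

  have stepA: "FgEta X Y unBC unCD FL g (-1) = deriv FL 1"
  proof (cases "dotJ X Y (-1) 1 = 0")
    case True
    then have "S_CD X Y (-1) = 0" "lamD X Y = 0" using S_CD_eq[OF det[OF m1(1) m1(2)]] by (auto simp: lamD_def)
    then show ?thesis using compatD by (simp add: FgEta_def deriv_polys polyvals)
  next
    case False
    then have "S_CD X Y (-1) \<noteq> 0" "lamD X Y = 1"
      using S_CD_eq[OF det[OF m1(1) m1(2)]] nxi2_pos[OF det[OF m1(1) m1(2)]] by (auto simp: lamD_def)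
    then show ?thesis by (simp add: FgEta_def deriv_polys polyvals FaXiD_def)
  qed
  have stepB: "FgXi X Y unBC unCD FB g (-1) = deriv FB 1"
  proof (cases "dotJ X Y 1 (-1) = 0")
    case True
    then have "S_BC X Y (-1) = 0" "lamB X Y = 0" by (auto simp: lamB_def S_BC_def)
    then show ?thesis using compatB by (simp add: FgXi_def deriv_polys polyvals)
  next
    case False
    then have "S_BC X Y (-1) \<noteq> 0" "lamB X Y = 1"
      using neta2_pos[OF det[OF m1(2) m1(1)]] by (auto simp: lamB_def S_BC_def)
    then show ?thesis by (simp add: FgXi_def deriv_polys polyvals FaEtaB_def)
  qed
  have stepC1: "FgEta X Y unBC unCD FL g 1 = FaEtaC X Y unBC unCD"
    using den by (simp add: FgEta_def deriv_polys polyvals FaXiC_def FaEtaC_def field_simps)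
  have stepC2: "FgXi X Y unBC unCD FB g 1 = FaXiC X Y unBC unCD"
    using den by (simp add: FgXi_def deriv_polys polyvals FaXiC_def FaEtaC_def field_simps)
  have dpg1: "((\<lambda>s. pxi g s 1) has_real_derivative pxi (pxi g) 1 1) (at 1)"
    using C1_pxi[OF cg(2) inW[OF m1(2) m1(2)]] .
  have eqE: "FgEta X Y unBC unCD FL g = (\<lambda>s. T_CD X Y unCD s - S_CD X Y s *
       (pxi g s 1 - (g (-1) 1 - FL 1) * drho0 s
        - (pxi g 1 1 - FaXiC X Y unBC unCD) * dups1 s
        - lamD X Y * (pxi g (-1) 1 - FaXiD X Y unCD FL) * dups0 s
        - lamC X Y * (pxi (pxi g) 1 1 - FgXiXi X Y unBC unCD g) * dom1 s))"
    by (rule ext) (simp add: FgEta_def deriv_polys)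
  have DE0: "(FgEta X Y unBC unCD FL g has_real_derivative
      deriv (T_CD X Y unCD) 1 - (deriv (S_CD X Y) 1 * FaXiC X Y unBC unCD
        + S_CD X Y 1 * (pxi (pxi g) 1 1 - lamC X Y * (pxi (pxi g) 1 1 - FgXiXi X Y unBC unCD g)))) (at 1)"
    unfolding eqE
    by (auto intro!: derivative_eq_intros dTCD dSCD dpg1 D_drho0 D_dups0 D_dups1 D_dom1 simp: polyvals)
  have Eeq: "deriv (T_CD X Y unCD) 1 - (deriv (S_CD X Y) 1 * FaXiC X Y unBC unCD
        + S_CD X Y 1 * (pxi (pxi g) 1 1 - lamC X Y * (pxi (pxi g) 1 1 - FgXiXi X Y unBC unCD g)))
      = FgXiEta X Y unBC unCD g"
  proof (cases "dotJ X Y 1 1 = 0")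
    case True
    then have "S_CD X Y 1 = 0" "S_BC X Y 1 = 0" "lamC X Y = 0"
      using S_CD_eq[OF det[OF m1(2) m1(2)]] by (auto simp: lamC_def S_BC_def)
    then show ?thesis using compatC by (simp add: FgXiEta_def)
  next
    case False
    then have "S_CD X Y 1 \<noteq> 0" "lamC X Y = 1"
      using S_CD_eq[OF det[OF m1(2) m1(2)]] nxi2_pos[OF det[OF m1(2) m1(2)]] by (auto simp: lamC_def)
    then show ?thesis by (simp add: FgXiEta_def FgXiXi_def RC_def field_simps)
  qed
  have DE: "(FgEta X Y unBC unCD FL g has_real_derivative FgXiEta X Y unBC unCD g) (at 1)"
    using DE0 Eeq by simp
  have dpg2: "((\<lambda>t. peta g 1 t) has_real_derivative peta (peta g) 1 1) (at 1)"
    using C1_peta[OF cg(3) inW[OF m1(2) m1(2)]] .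
  have eqX: "FgXi X Y unBC unCD FB g = (\<lambda>t. T_BC X Y unBC t - S_BC X Y t *
       (peta g 1 t - (g 1 (-1) - FB 1) * drho0 t
        - (peta g 1 1 - FaEtaC X Y unBC unCD) * dups1 t
        - lamB X Y * (peta g 1 (-1) - FaEtaB X Y unBC FB) * dups0 t))"
    by (rule ext) (simp add: FgXi_def deriv_polys)
  have DX0: "(FgXi X Y unBC unCD FB g has_real_derivative
      deriv (T_BC X Y unBC) 1 - (deriv (S_BC X Y) 1 * FaEtaC X Y unBC unCD
        + S_BC X Y 1 * peta (peta g) 1 1)) (at 1)"
    unfolding eqX
    by (auto intro!: derivative_eq_intros dTBC dSBC dpg2 D_drho0 D_dups0 D_dups1 simp: polyvals)
  have DX: "(FgXi X Y unBC unCD FB g has_real_derivative FgXiEta X Y unBC unCD g) (at 1)"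
    using DX0 by (simp add: FgXiEta_def algebra_simps)
  show ?thesis
  proof (intro ballI conjI)
    fix \<xi> \<eta> :: real assume xi: "\<xi> \<in> {-1..1}" and eta: "\<eta> \<in> {-1..1}"
    show "Vfun X Y unBC unCD FL FB g (-1) \<eta> = FL \<eta>"
      using stepA corner by (simp add: Vfun_def Pg_def PFg_def polyvals)
    show "Vfun X Y unBC unCD FL FB g \<xi> (-1) = FB \<xi>"
      using stepB corner by (simp add: Vfun_def Pg_def PFg_def polyvals)
    have dgx: "((\<lambda>s. g s \<eta>) has_real_derivative pxi g 1 \<eta>) (at 1)"
      using C1_pxi[OF cg(1) inW[OF m1(2) eta]] .
    have dgm: "((\<lambda>s. g s (-1)) has_real_derivative pxi g 1 (-1)) (at 1)"
      using C1_pxi[OF cg(1) inW[OF m1(2) m1(1)]] .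
    have dpe: "((\<lambda>s. peta g s 1) has_real_derivative pxi (peta g) 1 1) (at 1)"
      using C1_pxi[OF cg(3) inW[OF m1(2) m1(2)]] .
    have VX: "((\<lambda>s. Vfun X Y unBC unCD FL FB g s \<eta>) has_real_derivative FgXi X Y unBC unCD FB g \<eta>) (at 1)"
      unfolding Vfun_def Pg_def PFg_def
      by (auto intro!: derivative_eq_intros dgx dgm dpe dFB DE D_rho0 D_rho1 D_ups0 D_ups1 D_om1 simp: polyvals sch)
    have eqV1: "(\<lambda>t. Vfun X Y unBC unCD FL FB g 1 t) = (\<lambda>t. g 1 t - (g 1 (-1) * rho0 t + peta g 1 1 * ups1 t
        + lamB X Y * peta g 1 (-1) * ups0 t) + (FB 1 * rho0 t + FaEtaC X Y unBC unCD * ups1 t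
        + lamB X Y * FaEtaB X Y unBC FB * ups0 t))"
      by (rule ext) (simp add: Vfun_def Pg_def PFg_def polyvals stepC1)
    have dge: "((\<lambda>t. g 1 t) has_real_derivative peta g 1 \<eta>) (at \<eta>)"
      using C1_peta[OF cg(1) inW[OF m1(2) eta]] .
    have VY: "((\<lambda>t. Vfun X Y unBC unCD FL FB g 1 t) has_real_derivative
        peta g 1 \<eta> - (g 1 (-1) * drho0 \<eta> + peta g 1 1 * dups1 \<eta> + lamB X Y * peta g 1 (-1) * dups0 \<eta>)
        + (FB 1 * drho0 \<eta> + FaEtaC X Y unBC unCD * dups1 \<eta> + lamB X Y * FaEtaB X Y unBC FB * dups0 \<eta>)) (at \<eta>)"
      unfolding eqV1 by (auto intro!: derivative_eq_intros dge D_rho0 D_ups0 D_ups1)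
    show "pxi (Vfun X Y unBC unCD FL FB g) 1 \<eta>
             + S_BC X Y \<eta> * peta (Vfun X Y unBC unCD FL FB g) 1 \<eta> = T_BC X Y unBC \<eta>"
    proof -
      have px: "pxi (Vfun X Y unBC unCD FL FB g) 1 \<eta> = FgXi X Y unBC unCD FB g \<eta>"
        unfolding pxi_def[of "Vfun X Y unBC unCD FL FB g"] by (rule DERIV_imp_deriv[OF VX])
      have pe: "peta (Vfun X Y unBC unCD FL FB g) 1 \<eta> =
        peta g 1 \<eta> - (g 1 (-1) * drho0 \<eta> + peta g 1 1 * dups1 \<eta> + lamB X Y * peta g 1 (-1) * dups0 \<eta>)
        + (FB 1 * drho0 \<eta> + FaEtaC X Y unBC unCD * dups1 \<eta> + lamB X Y * FaEtaB X Y unBC FB * dups0 \<eta>)"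
        unfolding peta_def[of "Vfun X Y unBC unCD FL FB g"] by (rule DERIV_imp_deriv[OF VY])
      show ?thesis unfolding px pe by (simp add: FgXi_def deriv_polys algebra_simps)
    qed
    have dgy: "((\<lambda>t. g \<xi> t) has_real_derivative peta g \<xi> 1) (at 1)"
      using C1_peta[OF cg(1) inW[OF xi m1(2)]] .
    have dgy2: "((\<lambda>t. g (-1) t) has_real_derivative peta g (-1) 1) (at 1)"
      using C1_peta[OF cg(1) inW[OF m1(1) m1(2)]] .
    have dpx: "((\<lambda>t. pxi g 1 t) has_real_derivative peta (pxi g) 1 1) (at 1)"
      using C1_peta[OF cg(2) inW[OF m1(2) m1(2)]] .
    have VY2: "((\<lambda>t. Vfun X Y unBC unCD FL FB g \<xi> t) has_real_derivative FgEta X Y unBC unCD FL g \<xi>) (at 1)"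
      unfolding Vfun_def Pg_def PFg_def
      by (auto intro!: derivative_eq_intros dgy dgy2 dpx dFL DX D_rho0 D_rho1 D_ups0 D_ups1 D_om1 simp: polyvals)
    have eqV2: "(\<lambda>s. Vfun X Y unBC unCD FL FB g s 1) = (\<lambda>s. g s 1 - (g (-1) 1 * rho0 s + pxi g 1 1 * ups1 s
        + (lamD X Y * pxi g (-1) 1 * ups0 s + lamC X Y * pxi (pxi g) 1 1 * om1 s))
        + (FL 1 * rho0 s + FaXiC X Y unBC unCD * ups1 s
        + (lamD X Y * FaXiD X Y unCD FL * ups0 s + lamC X Y * FgXiXi X Y unBC unCD g * om1 s)))"
      by (rule ext) (simp add: Vfun_def Pg_def PFg_def polyvals stepC2)
    have dgs: "((\<lambda>s. g s 1) has_real_derivative pxi g \<xi> 1) (at \<xi>)"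
      using C1_pxi[OF cg(1) inW[OF xi m1(2)]] .
    have VX2: "((\<lambda>s. Vfun X Y unBC unCD FL FB g s 1) has_real_derivative
        pxi g \<xi> 1 - (g (-1) 1 * drho0 \<xi> + pxi g 1 1 * dups1 \<xi>
        + (lamD X Y * pxi g (-1) 1 * dups0 \<xi> + lamC X Y * pxi (pxi g) 1 1 * dom1 \<xi>))
        + (FL 1 * drho0 \<xi> + FaXiC X Y unBC unCD * dups1 \<xi>
        + (lamD X Y * FaXiD X Y unCD FL * dups0 \<xi> + lamC X Y * FgXiXi X Y unBC unCD g * dom1 \<xi>))) (at \<xi>)"
      unfolding eqV2 by (auto intro!: derivative_eq_intros dgs D_rho0 D_ups0 D_ups1 D_om1)
    show "peta (Vfun X Y unBC unCD FL FB g) \<xi> 1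
             + S_CD X Y \<xi> * pxi (Vfun X Y unBC unCD FL FB g) \<xi> 1 = T_CD X Y unCD \<xi>"
    proof -
      have pe: "peta (Vfun X Y unBC unCD FL FB g) \<xi> 1 = FgEta X Y unBC unCD FL g \<xi>"
        unfolding peta_def[of "Vfun X Y unBC unCD FL FB g"] by (rule DERIV_imp_deriv[OF VY2])
      have px: "pxi (Vfun X Y unBC unCD FL FB g) \<xi> 1 =
        pxi g \<xi> 1 - (g (-1) 1 * drho0 \<xi> + pxi g 1 1 * dups1 \<xi>
        + (lamD X Y * pxi g (-1) 1 * dups0 \<xi> + lamC X Y * pxi (pxi g) 1 1 * dom1 \<xi>))
        + (FL 1 * drho0 \<xi> + FaXiC X Y unBC unCD * dups1 \<xi>
        + (lamD X Y * FaXiD X Y unCD FL * dups0 \<xi> + lamC X Y * FgXiXi X Y unBC unCD g * dom1 \<xi>))"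
        unfolding pxi_def[of "Vfun X Y unBC unCD FL FB g"] by (rule DERIV_imp_deriv[OF VX2])
      show ?thesis unfolding px pe by (simp add: FgEta_def deriv_polys algebra_simps)
    qed
  qed
qed
end
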